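(* Let $d,K\ge 2$ be integers and let $a^\dagger\in\{1,\dots,K\}$ be a distinguished arm. For each arm $a$, let $\hat\theta_a\in\mathbb{R}^d$, let $\widetilde V_{a}\in\mathbb{R}^{d\times d}$ be symmetric positive definite, let $\beta_a>0$, and define the ellipsoid $$\widetilde{\mathcal C}_{a}=\{\theta\in\mathbb{R}^d:\ \|\theta-\hat\theta_a\|_{\widetilde V_a}\le \beta_a\}.$$ Fix $x^\dagger\in\mathbb{R}^d$ and $\xi>0$. Consider the optimization problem $$\min_{y\in\mathbb{R}^d}\ \|y\|_2\quad\text{s.t.}\quad \max_{\theta\in\widetilde{\mathcal C}_{a}}\langle x^\dagger+y,\theta\rangle+\xi\le \max_{\theta\in\widetilde{\mathcal C}_{a^\dagger}}\langle x^\dagger+y,\theta\rangle\ \text{ for all } a\neq a^\dagger .$$ Then this problem is feasible (i.e. some $y\in\mathbb{R}^d$ satisfies the constraints) if and only if $$\exists\,\theta\in\widetilde{\mathcal C}_{a^\dagger}\ \text{ such that }\ \theta\notin\mathrm{Conv}\Big(\bigcup_{a\neq a^\dagger}\widetilde{\mathcal C}_{a}\Big).$$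
   Context: $\|x\|_V=\sqrt{x^\top V x}$ for a positive definite matrix $V$; $\mathrm{Conv}$ denotes the convex hull. In the paper these ellipsoids are the confidence sets maintained by the LinUCB algorithm at a given time $t$ (with $\hat\theta_a$ the regularized least-squares estimate, $\widetilde V_a$ the design matrix built from the contexts the algorithm actually observed, and $\beta_a$ the confidence width), and the problem is the attacker's problem of finding the smallest perturbation $y$ of a target user's context $x^\dagger$ making arm $a^\dagger$ have the highest upper confidence bound by a margin $\xi$. *)

theory Defs
  imports "HOL-Analysis.Analysis"
begin

definition Vnorm :: "real^'d^'d \<Rightarrow> real^'d \<Rightarrow> real" where
  "Vnorm V x = sqrt (x \<bullet> (V *v x))"

definition pos_def_mat :: "real^'d^'d \<Rightarrow> bool" where
  "pos_def_mat V \<longleftrightarrow> transpose V = V \<and> (\<forall>x. x \<noteq> 0 \<longrightarrow> x \<bullet> (V *v x) > 0)"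

definition ellipsoid :: "real^'d \<Rightarrow> real^'d^'d \<Rightarrow> real \<Rightarrow> (real^'d) set" where
  "ellipsoid th V b = {\<theta>. Vnorm V (\<theta> - th) \<le> b}"

end

theory Submission
  imports Defs
begin

lemma posdef_lower:
  fixes V :: "real^'d^'d"
  assumes "pos_def_mat V"
  obtains m where "m > 0" "\<And>x. m * (norm x)^2 \<le> x \<bullet> (V *v x)"
proof -
  have ne: "sphere (0::real^'d) 1 \<noteq> {}" by (simp add: sphere_eq_empty)
  have co: "continuous_on (sphere (0::real^'d) 1) (\<lambda>x. x \<bullet> (V *v x))"
    by (intro continuous_intros)
  obtain u where u: "u \<in> sphere 0 1" and umin: "\<And>y. y \<in> sphere 0 1 \<Longrightarrow> u \<bullet> (V *v u) \<le> y \<bullet> (V *v y)"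
    using continuous_attains_inf[OF compact_sphere ne co] by blast
  have "u \<noteq> 0" using u by auto
  hence mpos: "u \<bullet> (V *v u) > 0" using assms unfolding pos_def_mat_def by blast
  have "u \<bullet> (V *v u) * (norm x)^2 \<le> x \<bullet> (V *v x)" for x :: "real^'d"
  proof (cases "x = 0")
    case True thus ?thesis by simp
  next
    case False
    define w where "w = (1 / norm x) *\<^sub>R x"
    have w: "w \<in> sphere 0 1" using False by (simp add: w_def)
    have xw: "x = norm x *\<^sub>R w" using False by (simp add: w_def)
    have "x \<bullet> (V *v x) = (norm x)^2 * (w \<bullet> (V *v w))"
      by (subst (1 2) xw) (simp add: matrix_vector_mult_scaleR power2_eq_square)
    moreover have "u \<bullet> (V *v u) \<le> w \<bullet> (V *v w)" using umin[OF w] .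
    ultimately show ?thesis by (simp add: mult_right_mono mult.commute[of "(norm x)^2"])
  qed
  thus ?thesis using that mpos by blast
qed

lemma ell_compact:
  fixes V :: "real^'d^'d"
  assumes "pos_def_mat V"
  shows "compact (ellipsoid th V b)"
unfolding compact_eq_bounded_closed
proof (rule conjI[rotated])
  obtain m where m: "m > 0" "\<And>x. m * (norm x)^2 \<le> x \<bullet> (V *v x)"
    using posdef_lower[OF assms] by blast
  have c: "continuous_on UNIV (\<lambda>\<theta>::real^'d. V *v (\<theta> - th))"
    by (rule bounded_linear.continuous_on[OF matrix_vector_mul_bounded_linear]) (intro continuous_intros)
  show "closed (ellipsoid th V b)"
    unfolding ellipsoid_def Vnorm_def
    by (intro closed_Collect_le continuous_on_inner c continuous_intros)
  have "norm \<theta> \<le> norm th + sqrt (b^2 / m)" if "\<theta> \<in> ellipsoid th V b" for \<theta>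
  proof -
    let ?x = "\<theta> - th"
    have s: "sqrt (?x \<bullet> (V *v ?x)) \<le> b" using that by (simp add: ellipsoid_def Vnorm_def)
    have "0 \<le> m * (norm ?x)^2" using m(1) by simp
    hence q0: "0 \<le> ?x \<bullet> (V *v ?x)" using m(2)[of ?x] by linarith
    have "(sqrt (?x \<bullet> (V *v ?x)))^2 \<le> b^2"
      by (rule power_mono[OF s real_sqrt_ge_zero[OF q0]])
    hence "?x \<bullet> (V *v ?x) \<le> b^2" using q0 by simp
    hence "m * (norm ?x)^2 \<le> b^2" using m(2)[of ?x] by linarith
    hence "(norm ?x)^2 \<le> b^2 / m" using m(1) by (simp add: field_simps)
    hence "norm ?x \<le> sqrt (b^2/m)" by (simp add: real_le_rsqrt)
    moreover have "norm \<theta> \<le> norm th + norm ?x" by (metis norm_triangle_sub add.commute)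
    ultimately show ?thesis by linarith
  qed
  thus "bounded (ellipsoid th V b)" unfolding bounded_iff by blast
qed

lemma ell_ne: "ellipsoid th V b \<noteq> {}" if "b \<ge> 0"
  using that by (auto simp: ellipsoid_def Vnorm_def intro!: exI[of _ th])

theorem theorem1:
  fixes K :: nat and adag :: nat
    and thetahat :: "nat \<Rightarrow> real^'d"
    and V :: "nat \<Rightarrow> real^'d^'d"
    and beta :: "nat \<Rightarrow> real"
    and xdag :: "real^'d" and \<xi> :: real
  assumes "CARD('d) \<ge> 2" and "K \<ge> 2"
    and "adag \<in> {1..K}"
    and "\<And>a. a \<in> {1..K} \<Longrightarrow> pos_def_mat (V a)"
    and "\<And>a. a \<in> {1..K} \<Longrightarrow> beta a > 0"
    and "\<xi> > 0"
  shows "(\<exists>y :: real^'d. \<forall>a \<in> {1..K} - {adag}.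
            (SUP \<theta>\<in>ellipsoid (thetahat a) (V a) (beta a). (xdag + y) \<bullet> \<theta>) + \<xi>
              \<le> (SUP \<theta>\<in>ellipsoid (thetahat adag) (V adag) (beta adag). (xdag + y) \<bullet> \<theta>))
     \<longleftrightarrow> (\<exists>\<theta> \<in> ellipsoid (thetahat adag) (V adag) (beta adag).
            \<theta> \<notin> convex hull (\<Union>a \<in> {1..K} - {adag}. ellipsoid (thetahat a) (V a) (beta a)))"
  (is "?L \<longleftrightarrow> ?R")
proof -
  define C where "C a = ellipsoid (thetahat a) (V a) (beta a)" for a
  define A where "A = {1..K} - {adag}"
  have Ccomp: "compact (C a)" if "a \<in> {1..K}" for a
    unfolding C_def using ell_compact assms(4)[OF that] by blast
  have Cne: "C a \<noteq> {}" if "a \<in> {1..K}" for a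
    unfolding C_def using ell_ne assms(5)[OF that] by (meson less_imp_le)
  have bdd: "bdd_above ((\<lambda>\<theta>. z \<bullet> \<theta>) ` C a)" if "a \<in> {1..K}" for a z
  proof -
    have "compact ((\<lambda>\<theta>. z \<bullet> \<theta>) ` C a)"
      by (intro compact_continuous_image Ccomp[OF that] continuous_intros)
    thus ?thesis by (simp add: bounded_imp_bdd_above compact_imp_bounded)
  qed
  have Asub: "A \<subseteq> {1..K}" unfolding A_def by auto
  have Ane: "A \<noteq> {}"
  proof -
    have "(if adag = 1 then 2 else 1) \<in> A" using assms(2,3) unfolding A_def by auto
    thus ?thesis by blast
  qed
  have "?L \<longleftrightarrow> (\<exists>z. \<forall>a\<in>A. (SUP \<theta>\<in>C a. z \<bullet> \<theta>) + \<xi> \<le> (SUP \<theta>\<in>C adag. z \<bullet> \<theta>))"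
    unfolding A_def C_def
  proof
    assume "?L" then obtain y where "\<forall>a\<in>{1..K} - {adag}.
            (SUP \<theta>\<in>ellipsoid (thetahat a) (V a) (beta a). (xdag + y) \<bullet> \<theta>) + \<xi>
              \<le> (SUP \<theta>\<in>ellipsoid (thetahat adag) (V adag) (beta adag). (xdag + y) \<bullet> \<theta>)" by blast
    thus "\<exists>z. \<forall>a\<in>{1..K} - {adag}. (SUP \<theta>\<in>ellipsoid (thetahat a) (V a) (beta a). z \<bullet> \<theta>) + \<xi> \<le> (SUP \<theta>\<in>ellipsoid (thetahat adag) (V adag) (beta adag). z \<bullet> \<theta>)"
      by (intro exI[of _ "xdag + y"])
  next
    assume "\<exists>z. \<forall>a\<in>{1..K} - {adag}. (SUP \<theta>\<in>ellipsoid (thetahat a) (V a) (beta a). z \<bullet> \<theta>) + \<xi> \<le> (SUP \<theta>\<in>ellipsoid (thetahat adag) (V adag) (beta adag). z \<bullet> \<theta>)"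
    then obtain z where "\<forall>a\<in>{1..K} - {adag}. (SUP \<theta>\<in>ellipsoid (thetahat a) (V a) (beta a). z \<bullet> \<theta>) + \<xi> \<le> (SUP \<theta>\<in>ellipsoid (thetahat adag) (V adag) (beta adag). z \<bullet> \<theta>)" by blast
    thus ?L by (intro exI[of _ "z - xdag"]) simp
  qed
  also have "\<dots> \<longleftrightarrow> (\<exists>\<theta> \<in> C adag. \<theta> \<notin> convex hull (\<Union>a\<in>A. C a))"
  proof
    assume "\<exists>z. \<forall>a\<in>A. (SUP \<theta>\<in>C a. z \<bullet> \<theta>) + \<xi> \<le> (SUP \<theta>\<in>C adag. z \<bullet> \<theta>)"
    then obtain z where z: "\<And>a. a\<in>A \<Longrightarrow> (SUP \<theta>\<in>C a. z \<bullet> \<theta>) + \<xi> \<le> (SUP \<theta>\<in>C adag. z \<bullet> \<theta>)"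
      by blast
    let ?M = "SUP \<theta>\<in>C adag. z \<bullet> \<theta>"
    have "?M - \<xi> < ?M" using assms(6) by simp
    then obtain \<theta> where th: "\<theta> \<in> C adag" "?M - \<xi> < z \<bullet> \<theta>"
      using less_cSUP_iff[OF Cne[OF assms(3)] bdd[OF assms(3)]] by blast
    have "(\<Union>a\<in>A. C a) \<subseteq> {u. z \<bullet> u < z \<bullet> \<theta>}"
    proof
      fix u assume "u \<in> (\<Union>a\<in>A. C a)"
      then obtain a where a: "a \<in> A" "u \<in> C a" by blast
      have "z \<bullet> u \<le> (SUP \<theta>\<in>C a. z \<bullet> \<theta>)"
        using cSUP_upper[OF a(2) bdd] a(1) Asub by blast
      thus "u \<in> {u. z \<bullet> u < z \<bullet> \<theta>}" using z[OF a(1)] th(2) by simp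
    qed
    hence "convex hull (\<Union>a\<in>A. C a) \<subseteq> {u. z \<bullet> u < z \<bullet> \<theta>}"
      by (intro hull_minimal convex_halfspace_lt)
    thus "\<exists>\<theta> \<in> C adag. \<theta> \<notin> convex hull (\<Union>a\<in>A. C a)" using th(1) by blast
  next
    assume "\<exists>\<theta> \<in> C adag. \<theta> \<notin> convex hull (\<Union>a\<in>A. C a)"
    then obtain \<theta> where th: "\<theta> \<in> C adag" "\<theta> \<notin> convex hull (\<Union>a\<in>A. C a)" by blast
    have "compact (\<Union>a\<in>A. C a)"
      using Asub by (intro compact_UN) (auto simp: A_def intro: Ccomp)
    hence "compact (convex hull (\<Union>a\<in>A. C a))" by (rule compact_convex_hull)
    then obtain c b where cb: "c \<bullet> \<theta> < b" "\<And>x. x \<in> convex hull (\<Union>a\<in>A. C a) \<Longrightarrow> b < c \<bullet> x"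
      using separating_hyperplane_closed_point[OF convex_convex_hull _ th(2)]
      compact_imp_closed by blast
    define \<delta> where "\<delta> = b - c \<bullet> \<theta>"
    have dpos: "\<delta> > 0" using cb(1) by (simp add: \<delta>_def)
    define t where "t = \<xi> / \<delta>"
    have tpos: "t > 0" using dpos assms(6) by (simp add: t_def)
    define z where "z = (- t) *\<^sub>R c"
    have "\<forall>a\<in>A. (SUP \<theta>\<in>C a. z \<bullet> \<theta>) + \<xi> \<le> (SUP \<theta>\<in>C adag. z \<bullet> \<theta>)"
    proof
      fix a assume a: "a \<in> A"
      have "(SUP u\<in>C a. z \<bullet> u) \<le> - t * b"
      proof (rule cSUP_least)
        show "C a \<noteq> {}" using a Asub Cne by blast
        fix u assume "u \<in> C a"
        hence "u \<in> convex hull (\<Union>a\<in>A. C a)" using a by (auto intro: hull_inc)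
        hence "b < c \<bullet> u" by (rule cb(2))
        thus "z \<bullet> u \<le> - t * b" using tpos by (simp add: z_def)
      qed
      moreover have "z \<bullet> \<theta> \<le> (SUP u\<in>C adag. z \<bullet> u)"
        using cSUP_upper[OF th(1) bdd[OF assms(3)]] .
      moreover have "- t * b + \<xi> = z \<bullet> \<theta>"
        using dpos by (simp add: z_def t_def \<delta>_def field_simps)
      ultimately show "(SUP u\<in>C a. z \<bullet> u) + \<xi> \<le> (SUP u\<in>C adag. z \<bullet> u)" by linarith
    qed
    thus "\<exists>z. \<forall>a\<in>A. (SUP \<theta>\<in>C a. z \<bullet> \<theta>) + \<xi> \<le> (SUP \<theta>\<in>C adag. z \<bullet> \<theta>)" by blast
  qed
  also have "\<dots> \<longleftrightarrow> ?R" unfolding A_def C_def by simp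
  finally show ?thesis .
qed

end
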